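(* Suppose the scheme satisfies the tensorial $k$-$k$-order orthogonality condition and $u\in H^{k+2}(\Omega)$. Then for every $K=K_{i,j}\in\mathcal T_h$, $$\int_{x_{i-1}}^{x_i}R^S_{x,K}\,dx=\int_{x_{i-1}}^{x_i}R^{S,1}_{x,K}\,dx=0,\qquad \int_{y_{j-1}}^{y_j}R^S_{y,K}\,dy=\int_{y_{j-1}}^{y_j}R^{S,1}_{y,K}\,dy=0.$$
   Context: Setting: $\Omega=(0,1)^2$, $k\ge1$; mesh $0=x_0<\dots<x_{N_x}=1$, $0=y_0<\dots<y_{N_y}=1$, $K_{i,j}=[x_{i-1},x_i]\times[y_{j-1},y_j]$, $F_K:[-1,1]^2\to K$ affine with $x=\frac{x_i-x_{i-1}}{2}\hat x+\frac{x_{i-1}+x_i}{2}$, $y=\frac{y_j-y_{j-1}}{2}\hat y+\frac{y_{j-1}+y_j}{2}$. Dual parameters $-1<\alpha^x_1<\dots<\alpha^x_k<1$, $-1<\alpha^y_1<\dots<\alpha^y_k<1$, interpolation parameters $-1=a^x_0<\dots<a^x_k=1$, $-1=a^y_0<\dots<a^y_k=1$ with $a^x_{s-1}<\alpha^x_s<a^x_s$, $a^y_{s-1}<\alpha^y_s<a^y_s$; $\alpha^x_0=\alpha^y_0=-1$, $\alpha^x_{k+1}=\alpha^y_{k+1}=1$. Orthogonality condition: for $k-1\le r\le 2k-2$, the $x$-direction parameters satisfy the $k$-$r$-order orthogonality condition if $\int_{-1}^1 g(\hat x)(w(\hat x)-(\hat\Pi_xw)(\hat x))d\hat x=0$ for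 all $g\in P^r([-1,1])$, $w\in P^1([-1,1])$, where $(\hat\Pi_xw)(\hat x)=w(a^x_s)$ for $\hat x\in(\alpha^x_s,\alpha^x_{s+1})$; analogously in $y$. The tensorial $k$-$r$-order condition means both directions satisfy it. M-decomposition: $L_n$ Legendre polynomials; $\hat M_0=1$, $\hat M_1=\hat x$, $\hat M_n(\hat x)=\int_{-1}^{\hat x}L_{n-1}$ ($n\ge2$); $M^x_s(x)=\hat M_s(\hat x)$, $M^y_t(y)=\hat M_t(\hat y)$ on $K$. $\lambda_0(g)=\frac{g(1)+g(-1)}2$, $\lambda_1(g)=\frac{g(1)-g(-1)}2$, $\lambda_n(g)=\frac{2n-1}{2}\int_{-1}^1g'L_{n-1}$ ($n\ge2$); M-coefficients $b_{s,t}=b^K_{s,t}=\lambda^{(\hat x)}_s\lambda^{(\hat y)}_t(u\circ F_K)$. AMD-Super corrections: on each $K$, for $t\in\{0,1\}$ the numbers $b^*_{s,t}$ ($2\le s\le k$) solve $\sum_{s=2}^k b^*_{s,t}L_{s-1}(\alpha^x_m)+b_{k+1,t}L_k(\alpha^x_m)=0$, $m=1,\dots,k-1$; for $s\in\{0,1\}$ the numbers $b^*_{s,t}$ ($2\le t\le k$) solve $\sum_{t=2}^k b^*_{s,t}L_{t-1}(\alpha^y_m)+b_{s,k+1}L_k(\alpha^y_m)=0$, $m=1,\dots,k-1$ (systems assumed uniquely solvable). $R^S_{x,K}=\sum_{s=2}^kb^*_{s,0}M^x_s+b_{k+1,0}M^x_{k+1}$, $R^{S,1}_{x,K}=\sum_{s=2}^kb^*_{s,1}M^x_s+b_{k+1,1}M^x_{k+1}$,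 $R^S_{y,K}=\sum_{t=2}^kb^*_{0,t}M^y_t+b_{0,k+1}M^y_{k+1}$, $R^{S,1}_{y,K}=\sum_{t=2}^kb^*_{1,t}M^y_t+b_{1,k+1}M^y_{k+1}$. *)

theory Defs
  imports "HOL-Analysis.Analysis" "HOL-Computational_Algebra.Polynomial"
begin

fun legendre :: "nat \<Rightarrow> real \<Rightarrow> real" where
  "legendre 0 x = 1"
| "legendre (Suc 0) x = x"
| "legendre (Suc (Suc n)) x =
     ((2 * real n + 3) * x * legendre (Suc n) x - (real n + 1) * legendre n x) / (real n + 2)"

definition Mhat :: "nat \<Rightarrow> real \<Rightarrow> real" where
  "Mhat n xh = (if n = 0 then 1 else if n = 1 then xh
                else integral {-1..xh} (legendre (n - 1)))"

definition lamM :: "nat \<Rightarrow> (real \<Rightarrow> real) \<Rightarrow> real" where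
  "lamM n g = (if n = 0 then (g 1 + g (-1)) / 2
               else if n = 1 then (g 1 - g (-1)) / 2
               else (2 * real n - 1) / 2 * integral {-1..1} (\<lambda>t. deriv g t * legendre (n - 1) t))"

definition affmap :: "real \<Rightarrow> real \<Rightarrow> real \<Rightarrow> real" where
  "affmap l r xh = (r - l) / 2 * xh + (l + r) / 2"

definition refcoord :: "real \<Rightarrow> real \<Rightarrow> real \<Rightarrow> real" where
  "refcoord l r x = (2 * x - (l + r)) / (r - l)"

definition mesh :: "nat \<Rightarrow> (nat \<Rightarrow> real) \<Rightarrow> bool" where
  "mesh N xs \<longleftrightarrow> 0 < N \<and> xs 0 = 0 \<and> xs N = 1 \<and> (\<forall>i<N. xs i < xs (Suc i))"

text \<open>Dual parameters alpha_1..alpha_k (with alpha_0 = -1, alpha_(k+1) = 1) and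
  interpolation parameters a_0..a_k, interlacing.\<close>
definition dir_params :: "nat \<Rightarrow> (nat \<Rightarrow> real) \<Rightarrow> (nat \<Rightarrow> real) \<Rightarrow> bool" where
  "dir_params k a alpha \<longleftrightarrow>
     a 0 = -1 \<and> a k = 1 \<and> alpha 0 = -1 \<and> alpha (k + 1) = 1 \<and>
     (\<forall>s<k. a s < a (Suc s)) \<and> (\<forall>s\<le>k. alpha s < alpha (Suc s)) \<and>
     (\<forall>s\<in>{1..k}. a (s - 1) < alpha s \<and> alpha s < a s)"

text \<open>Interpolation (Pi w)(x) = w(a_s) for x in (alpha_s, alpha_(s+1)), s = 0..k
  (value at the finitely many points alpha_s irrelevant; set to 0).\<close>
definition interpPi :: "nat \<Rightarrow> (nat \<Rightarrow> real) \<Rightarrow> (nat \<Rightarrow> real) \<Rightarrow> (real \<Rightarrow> real) \<Rightarrow> real \<Rightarrow> real" where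
  "interpPi k a alpha w x =
     (if \<exists>s\<le>k. alpha s < x \<and> x < alpha (Suc s)
      then w (a (THE s. s \<le> k \<and> alpha s < x \<and> x < alpha (Suc s))) else 0)"

definition orth_cond :: "nat \<Rightarrow> nat \<Rightarrow> (nat \<Rightarrow> real) \<Rightarrow> (nat \<Rightarrow> real) \<Rightarrow> bool" where
  "orth_cond k r a alpha \<longleftrightarrow>
     k - 1 \<le> r \<and> r \<le> 2 * k - 2 \<and>
     (\<forall>g w :: real poly. degree g \<le> r \<longrightarrow> degree w \<le> 1 \<longrightarrow>
        integral {-1..1} (\<lambda>x. poly g x * (poly w x - interpPi k a alpha (poly w) x)) = 0)"

definition Mcoef :: "(real \<Rightarrow> real \<Rightarrow> real) \<Rightarrow> (nat \<Rightarrow> real) \<Rightarrow> (nat \<Rightarrow> real) \<Rightarrow> nat \<Rightarrow> nat \<Rightarrow> nat \<Rightarrow> nat \<Rightarrow> real" where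
  "Mcoef u xs ys i j s t =
     lamM s (\<lambda>xh. lamM t (\<lambda>yh. u (affmap (xs (i - 1)) (xs i) xh) (affmap (ys (j - 1)) (ys j) yh)))"

definition corr_sys :: "nat \<Rightarrow> (nat \<Rightarrow> real) \<Rightarrow> real \<Rightarrow> (nat \<Rightarrow> real) \<Rightarrow> bool" where
  "corr_sys k alpha c bs \<longleftrightarrow>
     (\<forall>s. s \<notin> {2..k} \<longrightarrow> bs s = 0) \<and>
     (\<forall>m\<in>{1..k-1}. (\<Sum>s=2..k. bs s * legendre (s - 1) (alpha m)) + c * legendre k (alpha m) = 0)"

definition corr_sol :: "nat \<Rightarrow> (nat \<Rightarrow> real) \<Rightarrow> real \<Rightarrow> nat \<Rightarrow> real" where
  "corr_sol k alpha c = (THE bs. corr_sys k alpha c bs)"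

definition corr_fun :: "nat \<Rightarrow> (nat \<Rightarrow> real) \<Rightarrow> real \<Rightarrow> real \<Rightarrow> real \<Rightarrow> real \<Rightarrow> real" where
  "corr_fun k alpha c l r z =
     (\<Sum>s=2..k. corr_sol k alpha c s * Mhat s (refcoord l r z)) + c * Mhat (k + 1) (refcoord l r z)"

text \<open>R^S_{x,K} (t=0) and R^{S,1}_{x,K} (t=1) as functions of x on [x_{i-1},x_i].\<close>
definition RSx :: "(real \<Rightarrow> real \<Rightarrow> real) \<Rightarrow> (nat \<Rightarrow> real) \<Rightarrow> (nat \<Rightarrow> real) \<Rightarrow> nat \<Rightarrow> (nat \<Rightarrow> real)
                   \<Rightarrow> nat \<Rightarrow> nat \<Rightarrow> nat \<Rightarrow> real \<Rightarrow> real" where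
  "RSx u xs ys k alphax i j t x = corr_fun k alphax (Mcoef u xs ys i j (k + 1) t) (xs (i - 1)) (xs i) x"

text \<open>R^S_{y,K} (s=0) and R^{S,1}_{y,K} (s=1) as functions of y on [y_{j-1},y_j].\<close>
definition RSy :: "(real \<Rightarrow> real \<Rightarrow> real) \<Rightarrow> (nat \<Rightarrow> real) \<Rightarrow> (nat \<Rightarrow> real) \<Rightarrow> nat \<Rightarrow> (nat \<Rightarrow> real)
                   \<Rightarrow> nat \<Rightarrow> nat \<Rightarrow> nat \<Rightarrow> real \<Rightarrow> real" where
  "RSy u xs ys k alphay i j s y = corr_fun k alphay (Mcoef u xs ys i j s (k + 1)) (ys (j - 1)) (ys j) y"

end

theory Submission imports Defs begin

fun legP :: "nat \<Rightarrow> real poly" where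
  "legP 0 = 1"
| "legP (Suc 0) = [:0,1:]"
| "legP (Suc (Suc n)) = smult (1 / (real n + 2))
     (smult (2 * real n + 3) ([:0,1:] * legP (Suc n)) - smult (real n + 1) (legP n))"

lemma poly_legP: "poly (legP n) x = legendre n x"
  by (induction n rule: legP.induct) (auto simp: field_simps)

lemma degree_legP: "degree (legP n) \<le> n"
proof (induction n rule: legP.induct)
  case (3 n)
  have a: "degree ([:0,1:] * legP (Suc n)) \<le> Suc (Suc n)"
    using degree_mult_le[of "[:0,1::real:]" "legP (Suc n)"] 3(1) by simp
  have "degree (smult (2 * real n + 3) ([:0,1:] * legP (Suc n)) - smult (real n + 1) (legP n)) \<le> Suc (Suc n)"
    by (rule degree_diff_le) (use a 3(2) in auto)
  then show ?case by simp
qed auto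

lemma poly_ftc:
  fixes p :: "real poly"
  assumes "a \<le> b"
  shows "((\<lambda>x. poly (pderiv p) x) has_integral (poly p b - poly p a)) {a..b}"
  by (rule fundamental_theorem_of_calculus[OF assms])
     (metis has_real_derivative_iff_has_vector_derivative has_field_derivative_at_within poly_DERIV)

lemma legendre_one: "legendre n 1 = 1"
  by (induction n rule: legP.induct) (auto simp: field_simps)

lemma legendre_mone: "legendre n (-1) = (-1) ^ n"
  by (induction n rule: legP.induct) (auto simp: field_simps)

definition D :: "nat \<Rightarrow> real \<Rightarrow> real" where "D n x = poly (pderiv (legP n)) x"

lemma D0: "D 0 x = 0" by (simp add: D_def)
lemma D1: "D (Suc 0) x = 1" by (simp add: D_def pderiv_pCons)
lemma Drec: "D (Suc (Suc n)) x =
   ((2 * real n + 3) * (legendre (Suc n) x + x * D (Suc n) x) - (real n + 1) * D n x) / (real n + 2)"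
  by (simp add: D_def pderiv_mult pderiv_pCons pderiv_smult pderiv_diff poly_legP field_simps)

lemma F_from_E:
  assumes E0: "x * D (Suc n) x - D n x = (real n + 1) * legendre (Suc n) x"
  shows "D (Suc (Suc n)) x = D n x + (2 * real n + 3) * legendre (Suc n) x"
proof -
  have r: "(real n + 2) * D (Suc (Suc n)) x = (2 * real n + 3) * legendre (Suc n) x + (2 * real n + 3) * (x * D (Suc n) x) - (real n + 1) * D n x"
    by (simp add: Drec field_simps)
  have xd: "x * D (Suc n) x = D n x + (real n + 1) * legendre (Suc n) x" using E0 by simp
  have "(real n + 2) * D (Suc (Suc n)) x = (real n + 2) * (D n x + (2 * real n + 3) * legendre (Suc n) x)"
    unfolding r xd by (simp add: algebra_simps)
  then show ?thesis by (metis add_nonneg_pos of_nat_0_le_iff zero_less_numeral mult_left_cancel less_irrefl)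
qed

lemma E_lemma: "x * D (Suc n) x - D n x = (real n + 1) * legendre (Suc n) x
              \<and> x * D (Suc (Suc n)) x - D (Suc n) x = (real n + 2) * legendre (Suc (Suc n)) x"
proof (induction n)
  case 0
  show ?case by (simp add: Drec D0 D1 field_simps)
next
  case (Suc n)
  have E0: "x * D (Suc n) x - D n x = (real n + 1) * legendre (Suc n) x" using Suc by blast
  have E1': "x * D (Suc (Suc n)) x - D (Suc n) x = (real n + 2) * legendre (Suc (Suc n)) x" using Suc by blast
  have E1: "x * D (Suc (Suc n)) x - D (Suc n) x = (real (Suc n) + 1) * legendre (Suc (Suc n)) x" using E1' by (simp add: add.commute)
  have F0: "D (Suc (Suc n)) x = D n x + (2 * real n + 3) * legendre (Suc n) x"
    using F_from_E[OF E0] .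
  have F1: "D (Suc (Suc (Suc n))) x = D (Suc n) x + (2 * real (Suc n) + 3) * legendre (Suc (Suc n)) x"
    using F_from_E[OF E1] .
  have xd: "x * D (Suc n) x = D n x + (real n + 1) * legendre (Suc n) x" using E0 by simp
  have rec3: "(real n + 3) * legendre (Suc (Suc (Suc n))) x = (2 * real n + 5) * x * legendre (Suc (Suc n)) x - (real n + 2) * legendre (Suc n) x"
  proof -
    have l: "legendre (Suc (Suc (Suc n))) x = ((2 * real (Suc n) + 3) * x * legendre (Suc (Suc n)) x - (real (Suc n) + 1) * legendre (Suc n) x) / (real (Suc n) + 2)"
      by (rule legendre.simps(3))
    show ?thesis unfolding l by (simp add: field_simps del: legendre.simps)
  qed
  have "x * D (Suc (Suc (Suc n))) x - D (Suc (Suc n)) x = (real n + 3) * legendre (Suc (Suc (Suc n))) x"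
    unfolding rec3 F1 F0 by (simp add: algebra_simps xd del: legendre.simps)
  then show ?case using E1 by (simp add: algebra_simps)
qed

lemma F_lemma: "D (Suc (Suc n)) x - D n x = (2 * real n + 3) * legendre (Suc n) x"
  using F_from_E[of x n] E_lemma[of x n] by simp

definition antiP :: "nat \<Rightarrow> real poly" where
  "antiP n = smult (1 / (2 * real n + 3)) (legP (Suc (Suc n)) - legP n)"

lemma antiP_deriv: "poly (pderiv (antiP n)) x = legendre (Suc n) x"
proof -
  have "poly (pderiv (antiP n)) x = (D (Suc (Suc n)) x - D n x) / (2 * real n + 3)"
    by (simp add: antiP_def pderiv_smult pderiv_diff D_def)
  also have "\<dots> = legendre (Suc n) x" unfolding F_lemma
    by (rule nonzero_mult_div_cancel_left) (smt (verit) of_nat_0_le_iff)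
  finally show ?thesis .
qed

lemma antiP_val: "poly (antiP n) x = (legendre (Suc (Suc n)) x - legendre n x) / (2 * real n + 3)"
  by (simp add: antiP_def poly_legP del: legendre.simps legP.simps)

lemma int_L: "((\<lambda>x. legendre (Suc n) x) has_integral 0) {-1..1}"
proof -
  have "((\<lambda>x. poly (pderiv (antiP n)) x) has_integral (poly (antiP n) 1 - poly (antiP n) (-1))) {-1..1}"
    by (rule poly_ftc) simp
  moreover have "poly (antiP n) 1 - poly (antiP n) (-1) = 0"
    unfolding antiP_val legendre_one legendre_mone by simp
  ultimately show ?thesis unfolding antiP_deriv by simp
qed

lemma int_L': "m \<ge> 1 \<Longrightarrow> ((\<lambda>x. legendre m x) has_integral 0) {-1..1}"
  using int_L[of "m - 1"] by simp

lemma xL_eq: "x * legendre (Suc (Suc n)) x =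
   ((real n + 3) * legendre (Suc (Suc (Suc n))) x + (real n + 2) * legendre (Suc n) x) / (2 * real n + 5)"
proof -
  have l: "legendre (Suc (Suc (Suc n))) x = ((2 * real (Suc n) + 3) * x * legendre (Suc (Suc n)) x - (real (Suc n) + 1) * legendre (Suc n) x) / (real (Suc n) + 2)"
    by (rule legendre.simps(3))
  have rec3: "(real n + 3) * legendre (Suc (Suc (Suc n))) x = (2 * real n + 5) * x * legendre (Suc (Suc n)) x - (real n + 2) * legendre (Suc n) x"
    unfolding l by (simp add: field_simps del: legendre.simps)
  have "((real n + 3) * legendre (Suc (Suc (Suc n))) x + (real n + 2) * legendre (Suc n) x) / (2 * real n + 5)
     = ((2 * real n + 5) * (x * legendre (Suc (Suc n)) x)) / (2 * real n + 5)"
    unfolding rec3 by (simp add: algebra_simps del: legendre.simps)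
  also have "\<dots> = x * legendre (Suc (Suc n)) x"
    by (rule nonzero_mult_div_cancel_left) (smt (verit) of_nat_0_le_iff)
  finally show ?thesis by simp
qed

lemma int_xL: "m \<ge> 2 \<Longrightarrow> ((\<lambda>x. x * legendre m x) has_integral 0) {-1..1}"
proof -
  assume "m \<ge> 2"
  then obtain n where m: "m = Suc (Suc n)" by (metis add_2_eq_Suc le_Suc_ex)
  have "((\<lambda>x. ((real n + 3) * legendre (Suc (Suc (Suc n))) x + (real n + 2) * legendre (Suc n) x) / (2 * real n + 5))
        has_integral (((real n + 3) * 0 + (real n + 2) * 0) / (2 * real n + 5))) {-1..1}"
    by (intro has_integral_divide has_integral_add has_integral_mult_right int_L)
  then show ?thesis unfolding m xL_eq by simp
qed

lemma int_xL1: "((\<lambda>x. x * legendre 1 x) has_integral 2/3) {-1..1}"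
proof -
  have "((\<lambda>x. poly (pderiv [:0,0,0,1/3:]) x) has_integral (poly [:0,0,0,1/3:] 1 - poly [:0,0,0,1/3::real:] (-1))) {-1..1}"
    by (rule poly_ftc) simp
  moreover have "(\<lambda>x. poly (pderiv [:0,0,0,1/3:]) x) = (\<lambda>x::real. x * legendre 1 x)"
    by (auto simp: pderiv_pCons power2_eq_square)
  ultimately show ?thesis by simp
qed

lemma Mhat_eq: "-1 \<le> t \<Longrightarrow> Mhat (Suc (Suc n)) t = (legendre (Suc (Suc n)) t - legendre n t) / (2 * real n + 3)"
proof -
  assume t: "-1 \<le> t"
  have "((\<lambda>x. poly (pderiv (antiP n)) x) has_integral (poly (antiP n) t - poly (antiP n) (-1))) {-1..t}"
    by (rule poly_ftc) (use t in simp)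
  then have "integral {-1..t} (legendre (Suc n)) = poly (antiP n) t - poly (antiP n) (-1)"
    unfolding antiP_deriv by (simp add: integral_unique)
  moreover have "poly (antiP n) (-1) = 0"
    unfolding antiP_val legendre_mone by simp
  ultimately show ?thesis by (simp add: Mhat_def antiP_val del: legendre.simps)
qed

lemma int_Mhat: "s \<ge> 3 \<Longrightarrow> (Mhat s has_integral 0) {-1..1}"
proof -
  assume s3: "s \<ge> 3"
  define n where "n = s - 2"
  have s: "s = Suc (Suc n)" and n: "n \<ge> 1" using s3 by (auto simp: n_def)
  have h: "((\<lambda>t. (legendre (Suc (Suc n)) t - legendre n t) / (2 * real n + 3)) has_integral ((0 - 0) / (2 * real n + 3))) {-1..1}"
    by (rule has_integral_divide, rule has_integral_diff, rule int_L', simp, rule int_L', rule n)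
  have z: "((0::real) - 0) / (2 * real n + 3) = 0" by simp
  have eq: "(Mhat (Suc (Suc n)) has_integral 0) {-1..1} = ((\<lambda>t. (legendre (Suc (Suc n)) t - legendre n t) / (2 * real n + 3)) has_integral 0) {-1..1}"
    by (rule has_integral_cong, rule Mhat_eq) auto
  show ?thesis unfolding s eq using h unfolding z .
qed


lemma al_mono:
  assumes "dir_params k a al" "s < t" "t \<le> k + 1"
  shows "al s < al t"
  using assms(2,3)
proof (induction t)
  case 0 then show ?case by simp
next
  case (Suc t)
  have st: "al t < al (Suc t)" using assms(1) Suc.prems unfolding dir_params_def by auto
  show ?case
  proof (cases "s = t")
    case True then show ?thesis using st by simp
  next
    case False then have "al s < al t" using Suc by simp
    then show ?thesis using st by simp
  qed
qed

lemma al_mono_le: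
  assumes "dir_params k a al" "s \<le> t" "t \<le> k + 1"
  shows "al s \<le> al t"
  using al_mono[OF assms(1) _ assms(3), of s] assms(2) by (cases "s = t") auto

lemma interp_val:
  assumes "dir_params k a al" "m \<le> k" "al m < x" "x < al (Suc m)"
  shows "interpPi k a al f x = f (a m)"
proof -
  have ex: "\<exists>s\<le>k. al s < x \<and> x < al (Suc s)" using assms by blast
  have "(THE s. s \<le> k \<and> al s < x \<and> x < al (Suc s)) = m"
  proof (rule the_equality)
    show "m \<le> k \<and> al m < x \<and> x < al (Suc m)" using assms by blast
  next
    fix s assume h: "s \<le> k \<and> al s < x \<and> x < al (Suc s)"
    show "s = m"
    proof (rule ccontr)
      assume "s \<noteq> m"
      then consider "Suc s \<le> m" | "Suc m \<le> s" by linarith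
      then show False
      proof cases
        case 1
        then have "al (Suc s) \<le> al m" using al_mono_le[OF assms(1) 1] assms(2) by simp
        then show False using h assms by linarith
      next
        case 2
        then have "al (Suc m) \<le> al s" using al_mono_le[OF assms(1) 2] h by simp
        then show False using h assms by linarith
      qed
    qed
  qed
  then show ?thesis unfolding interpPi_def using ex by simp
qed

lemma piece_int:
  fixes G :: "real poly"
  assumes "dir_params k a al" "m \<le> k"
  shows "((\<lambda>x. poly (pderiv G) x * interpPi k a al (\<lambda>x. x) x) has_integral
          (a m * (poly G (al (Suc m)) - poly G (al m)))) {al m .. al (Suc m)}"
proof -
  have le: "al m \<le> al (Suc m)" using al_mono_le[OF assms(1), of m "Suc m"] assms(2) by simp
  have h: "((\<lambda>x. a m * poly (pderiv G) x) has_integral (a m * (poly G (al (Suc m)) - poly G (al m)))) {al m .. al (Suc m)}"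
    by (rule has_integral_mult_right, rule poly_ftc, rule le)
  show ?thesis
  proof (rule has_integral_spike_finite[OF _ _ h])
    show "finite {al m, al (Suc m)}" by simp
  next
    fix x assume "x \<in> {al m..al (Suc m)} - {al m, al (Suc m)}"
    then have "al m < x" "x < al (Suc m)" by auto
    then show "poly (pderiv G) x * interpPi k a al (\<lambda>x. x) x = a m * poly (pderiv G) x"
      using interp_val[OF assms] by simp
  qed
qed

lemma cum_int:
  fixes G :: "real poly"
  assumes "dir_params k a al"
  shows "m \<le> k + 1 \<Longrightarrow> ((\<lambda>x. poly (pderiv G) x * interpPi k a al (\<lambda>x. x) x) has_integral
          (\<Sum>s<m. a s * (poly G (al (Suc s)) - poly G (al s)))) {al 0 .. al m}"
proof (induction m)
  case 0
  then show ?case using has_integral_refl(1)[of _ "al 0"] by simp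
next
  case (Suc m)
  have a: "al 0 \<le> al m" using al_mono_le[OF assms, of 0 m] Suc.prems by simp
  have b: "al m \<le> al (Suc m)" using al_mono_le[OF assms, of m "Suc m"] Suc.prems by simp
  show ?case
    using has_integral_combine[OF a b Suc.IH piece_int[OF assms, of m G]] Suc.prems by simp
qed

lemma abel_sum:
  fixes a f :: "nat \<Rightarrow> real"
  shows "(\<Sum>s<Suc n. a s * (f (Suc s) - f s)) = a n * f (Suc n) - a 0 * f 0 - (\<Sum>s=1..n. (a s - a (s - 1)) * f s)"
  by (induction n) (auto simp: algebra_simps)

lemma quad:
  fixes G :: "real poly"
  assumes dp: "dir_params k a al" and oc: "orth_cond k k a al" and dG: "degree G \<le> k + 1"
  shows "integral {-1..1} (poly G) = (\<Sum>s=1..k. (a s - a (s - 1)) * poly G (al s))"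
proof -
  have al0: "al 0 = -1" and alk: "al (k + 1) = 1" and a0: "a 0 = -1" and ak: "a k = 1"
    using dp unfolding dir_params_def by auto
  have pw: "poly [:0,1:] = (\<lambda>x::real. x)" by (rule ext) simp
  have dg: "degree (pderiv G) \<le> k" using dG by (simp add: degree_pderiv)
  have "integral {-1..1} (\<lambda>x. poly (pderiv G) x * (poly [:0,1:] x - interpPi k a al (poly [:0,1:]) x)) = 0"
  proof -
    have all: "\<forall>g w :: real poly. degree g \<le> k \<longrightarrow> degree w \<le> 1 \<longrightarrow>
        integral {-1..1} (\<lambda>x. poly g x * (poly w x - interpPi k a al (poly w) x)) = 0"
      using oc unfolding orth_cond_def by blast
    have d1: "degree [:0,1::real:] \<le> 1" by simp
    show ?thesis using all[rule_format, OF dg d1] .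
  qed
  then have orth0: "integral {-1..1} (\<lambda>x. poly (pderiv G) x * (x - interpPi k a al (\<lambda>x. x) x)) = 0"
    unfolding pw .
  define S where "S = (\<Sum>s<Suc k. a s * (poly G (al (Suc s)) - poly G (al s)))"
  have hPi: "((\<lambda>x. poly (pderiv G) x * interpPi k a al (\<lambda>x. x) x) has_integral S) {-1..1}"
    using cum_int[OF dp, of "k + 1" G] al0 alk unfolding S_def by simp
  have Gint: "(poly G has_integral integral {-1..1} (poly G)) {-1..1}"
    by (rule integrable_integral, rule integrable_continuous_real, rule continuous_on_poly, rule continuous_on_id)
  have ftc: "((\<lambda>x. poly (pderiv ([:0,1:] * G)) x) has_integral (poly ([:0,1:] * G) 1 - poly ([:0,1:] * G) (-1))) {-1..1}"
    by (rule poly_ftc) simp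
  have ftc2: "((\<lambda>x. poly (pderiv ([:0,1:] * G)) x - poly G x) has_integral
      ((poly ([:0,1:] * G) 1 - poly ([:0,1:] * G) (-1)) - integral {-1..1} (poly G))) {-1..1}"
    by (rule has_integral_diff[OF ftc Gint])
  have feq: "\<And>x. poly (pderiv ([:0,1:] * G)) x - poly G x = poly (pderiv G) x * x"
    by (simp add: pderiv_mult pderiv_pCons algebra_simps)
  have hx: "((\<lambda>x. poly (pderiv G) x * x) has_integral (poly G 1 + poly G (-1) - integral {-1..1} (poly G))) {-1..1}"
    using ftc2 unfolding feq by simp
  have "((\<lambda>x. poly (pderiv G) x * x - poly (pderiv G) x * interpPi k a al (\<lambda>x. x) x) has_integral
         (poly G 1 + poly G (-1) - integral {-1..1} (poly G) - S)) {-1..1}"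
    by (rule has_integral_diff[OF hx hPi])
  then have "((\<lambda>x. poly (pderiv G) x * (x - interpPi k a al (\<lambda>x. x) x)) has_integral
         (poly G 1 + poly G (-1) - integral {-1..1} (poly G) - S)) {-1..1}"
    by (simp add: algebra_simps)
  then have "integral {-1..1} (\<lambda>x. poly (pderiv G) x * (x - interpPi k a al (\<lambda>x. x) x)) = poly G 1 + poly G (-1) - integral {-1..1} (poly G) - S"
    by (rule integral_unique)
  then have "poly G 1 + poly G (-1) - integral {-1..1} (poly G) - S = 0"
    using orth0 by simp
  moreover have "S = a k * poly G (al (Suc k)) - a 0 * poly G (al 0) - (\<Sum>s=1..k. (a s - a (s - 1)) * poly G (al s))"
    unfolding S_def by (rule abel_sum)
  ultimately show ?thesis using al0 alk a0 ak by simp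
qed


lemma b2_zero:
  assumes k1: "k \<ge> 1" and dp: "dir_params k a al" and oc: "orth_cond k k a al"
    and ex: "\<exists>!bs. corr_sys k al c bs"
  shows "corr_sol k al c 2 = 0"
proof -
  have "k \<le> 2 * k - 2" using oc unfolding orth_cond_def by blast
  then have k2: "k \<ge> 2" using k1 by arith
  define bs where "bs = corr_sol k al c"
  have cs: "corr_sys k al c bs" unfolding bs_def corr_sol_def using theI'[OF ex] .
  have roots: "\<And>m. m \<in> {1..k-1} \<Longrightarrow> (\<Sum>s=2..k. bs s * legendre (s - 1) (al m)) + c * legendre k (al m) = 0"
    using cs unfolding corr_sys_def by blast
  define pP where "pP = (\<Sum>s\<in>{2..k}. smult (bs s) (legP (s - 1))) + smult c (legP k)"
  have ppP: "\<And>x. poly pP x = (\<Sum>s=2..k. bs s * legendre (s - 1) x) + c * legendre k x"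
    unfolding pP_def by (simp add: poly_sum poly_legP del: legendre.simps legP.simps)
  have dpP: "degree pP \<le> k"
    unfolding pP_def
  proof (rule degree_add_le)
    show "degree (\<Sum>s\<in>{2..k}. smult (bs s) (legP (s - 1))) \<le> k"
    proof (rule degree_sum_le)
      fix s assume "s \<in> {2..k}"
      then have sk: "s \<le> k" by simp
      then show "degree (smult (bs s) (legP (s - 1))) \<le> k"
        using degree_smult_le[of "bs s" "legP (s - 1)"] degree_legP[of "s - 1"] by linarith
    qed simp
    show "degree (smult c (legP k)) \<le> k"
      using degree_smult_le[of c "legP k"] degree_legP[of k] by linarith
  qed
  define xP where "xP = [:0,1:] * pP"
  have pxP: "\<And>x. poly xP x = x * poly pP x" unfolding xP_def by simp
  have dxP: "degree xP \<le> k + 1"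
    unfolding xP_def using degree_mult_le[of "[:0,1::real:]" pP] dpP by simp
  have r0: "\<And>m. m \<in> {1..k-1} \<Longrightarrow> poly pP (al m) = 0" using roots ppP by simp
  have ksplit: "\<And>f::nat\<Rightarrow>real. (\<Sum>s=1..k. f s) = (\<Sum>s=1..k-1. f s) + f k"
  proof -
    fix f :: "nat \<Rightarrow> real"
    obtain k' where kk: "k = Suc k'" using k2 by (cases k) auto
    have "(\<Sum>s=1..Suc k'. f s) = (\<Sum>s=1..k'. f s) + f (Suc k')"
      by (rule sum.cl_ivl_Suc[THEN trans]) simp
    then show "(\<Sum>s=1..k. f s) = (\<Sum>s=1..k-1. f s) + f k" unfolding kk by simp
  qed
  define w where "w = a k - a (k - 1)"
  have "\<forall>s<k. a s < a (Suc s)" using dp unfolding dir_params_def by blast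
  then have "a (k - 1) < a (Suc (k - 1))" using k2 by (metis diff_less zero_less_one less_le_trans le_numeral_extra(4) one_le_numeral)
  then have wpos: "w > 0" unfolding w_def using k2 by simp
  have q1: "integral {-1..1} (poly pP) = w * poly pP (al k)"
  proof -
    have "integral {-1..1} (poly pP) = (\<Sum>s=1..k. (a s - a (s - 1)) * poly pP (al s))"
      by (rule quad[OF dp oc]) (use dpP in simp)
    also have "\<dots> = (\<Sum>s=1..k-1. (a s - a (s - 1)) * poly pP (al s)) + w * poly pP (al k)"
      unfolding ksplit w_def ..
    also have "(\<Sum>s=1..k-1. (a s - a (s - 1)) * poly pP (al s)) = 0"
      by (rule sum.neutral) (simp add: r0)
    finally show ?thesis by simp
  qed
  have ipP: "(poly pP has_integral 0) {-1..1}"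
  proof -
    have "((\<lambda>x. (\<Sum>s=2..k. bs s * legendre (s - 1) x) + c * legendre k x) has_integral
          ((\<Sum>s=2..k. bs s * 0) + c * 0)) {-1..1}"
    proof (rule has_integral_add)
      show "((\<lambda>x. \<Sum>s=2..k. bs s * legendre (s - 1) x) has_integral (\<Sum>s=2..k. bs s * 0)) {-1..1}"
      proof (rule has_integral_sum)
        fix s assume "s \<in> {2..k}"
        then have "s - 1 \<ge> 1" by (simp; arith)
        then show "((\<lambda>x. bs s * legendre (s - 1) x) has_integral (bs s * 0)) {-1..1}"
          by (rule has_integral_mult_right[OF int_L'])
      qed simp
      show "((\<lambda>x. c * legendre k x) has_integral (c * 0)) {-1..1}"
        by (rule has_integral_mult_right, rule int_L') (use k2 in simp)
    qed
    moreover have "poly pP = (\<lambda>x. (\<Sum>s=2..k. bs s * legendre (s - 1) x) + c * legendre k x)"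
      using ppP by (rule ext)
    ultimately show ?thesis by simp
  qed
  have "w * poly pP (al k) = 0" using q1 integral_unique[OF ipP] by simp
  then have pk: "poly pP (al k) = 0" using wpos by simp
  have q2: "integral {-1..1} (poly xP) = 0"
  proof -
    have "integral {-1..1} (poly xP) = (\<Sum>s=1..k. (a s - a (s - 1)) * poly xP (al s))"
      by (rule quad[OF dp oc dxP])
    also have "\<dots> = 0"
    proof (rule sum.neutral, rule ballI)
      fix s assume s: "s \<in> {1..k}"
      have "poly pP (al s) = 0"
      proof (cases "s = k")
        case True then show ?thesis using pk by simp
      next
        case False then have "s \<in> {1..k-1}" using s by auto
        then show ?thesis using r0 by blast
      qed
      then show "(a s - a (s - 1)) * poly xP (al s) = 0" by (simp add: pxP)
    qed
    finally show ?thesis .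
  qed
  have ixP: "(poly xP has_integral (bs 2 * (2/3))) {-1..1}"
  proof -
    define iv where "iv = (\<lambda>s::nat. if s = 2 then bs 2 * (2/3) else (0::real))"
    have "((\<lambda>x. (\<Sum>s=2..k. bs s * (x * legendre (s - 1) x)) + c * (x * legendre k x)) has_integral
          ((\<Sum>s=2..k. iv s) + c * 0)) {-1..1}"
    proof (rule has_integral_add)
      show "((\<lambda>x. \<Sum>s=2..k. bs s * (x * legendre (s - 1) x)) has_integral (\<Sum>s=2..k. iv s)) {-1..1}"
      proof (rule has_integral_sum)
        fix s assume s: "s \<in> {2..k}"
        show "((\<lambda>x. bs s * (x * legendre (s - 1) x)) has_integral iv s) {-1..1}"
        proof (cases "s = 2")
          case True
          then show ?thesis unfolding iv_def using has_integral_mult_right[OF int_xL1, of "bs 2"] by simp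
        next
          case False
          then have "s - 1 \<ge> 2" using s by (simp; arith)
          then show ?thesis unfolding iv_def using has_integral_mult_right[OF int_xL, of "s - 1" "bs s"] False by simp
        qed
      qed simp
      show "((\<lambda>x. c * (x * legendre k x)) has_integral (c * 0)) {-1..1}"
        by (rule has_integral_mult_right, rule int_xL) (use k2 in simp)
    qed
    moreover have "(\<Sum>s=2..k. iv s) = bs 2 * (2/3)" unfolding iv_def using k2 by simp
    moreover have "poly xP = (\<lambda>x. (\<Sum>s=2..k. bs s * (x * legendre (s - 1) x)) + c * (x * legendre k x))"
      by (rule ext) (simp add: pxP ppP sum_distrib_left algebra_simps del: legendre.simps)
    ultimately show ?thesis by simp
  qed
  have "bs 2 * (2/3) = 0" using integral_unique[OF ixP] q2 by simp
  then show ?thesis unfolding bs_def by simp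
qed


lemma affine_int:
  fixes F :: "real \<Rightarrow> real" and l r :: real
  assumes lr: "l < r" and hF: "(F has_integral 0) {-1..1}"
  shows "((\<lambda>z. F (refcoord l r z)) has_integral 0) {l..r}"
proof -
  define m where "m = 2 / (r - l)"
  define c0 where "c0 = - (l + r) / (r - l)"
  have m0: "m \<noteq> 0" using lr unfolding m_def by simp
  have hF': "(F has_integral 0) (cbox (-1) 1)" using hF by simp
  have h: "((\<lambda>x. F (m *\<^sub>R x + c0)) has_integral (1 / (\<bar>m\<bar> ^ DIM(real))) *\<^sub>R 0)
       ((\<lambda>x. (1 / m) *\<^sub>R x + -((1 / m) *\<^sub>R c0)) ` cbox (-1) 1)"
    by (rule has_integral_affinity[OF hF' m0])
  have img: "(\<lambda>x. (1 / m) *\<^sub>R x + -((1 / m) *\<^sub>R c0)) ` cbox (-1) 1 = {l..r}"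
  proof -
    have pos: "0 \<le> 1 / m" using lr unfolding m_def by simp
    have e1: "(1 / m) *\<^sub>R (-1) + -((1 / m) *\<^sub>R c0) = l"
      using lr unfolding m_def c0_def by (simp add: field_simps)
    have e2: "(1 / m) *\<^sub>R 1 + -((1 / m) *\<^sub>R c0) = r"
      using lr unfolding m_def c0_def by (simp add: field_simps)
    have "cbox (-1::real) 1 \<noteq> {}" by simp
    then show ?thesis
      unfolding image_affinity_cbox[of "1 / m" "-((1 / m) *\<^sub>R c0)" "-1::real" 1] using pos e1 e2
      by simp
  qed
  have fe: "\<And>x. m *\<^sub>R x + c0 = refcoord l r x"
    unfolding m_def c0_def refcoord_def by (simp add: diff_divide_distrib add_divide_distrib)
  show ?thesis using h unfolding img fe by simp
qed

lemma corr_int: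
  assumes lr: "l < r" and k2: "k \<ge> 2" and b2: "corr_sol k al c 2 = 0"
  shows "integral {l..r} (corr_fun k al c l r) = 0"
proof -
  define bs where "bs = corr_sol k al c"
  define F where "F = (\<lambda>t. (\<Sum>s=2..k. bs s * Mhat s t) + c * Mhat (k + 1) t)"
  have hF: "(F has_integral 0) {-1..1}"
  proof -
    have "((\<lambda>t. (\<Sum>s=2..k. bs s * Mhat s t) + c * Mhat (k + 1) t) has_integral ((\<Sum>s=2..k. 0) + c * 0)) {-1..1}"
    proof (rule has_integral_add)
      show "((\<lambda>t. \<Sum>s=2..k. bs s * Mhat s t) has_integral (\<Sum>s=2..k. 0)) {-1..1}"
      proof (rule has_integral_sum)
        fix s assume s: "s \<in> {2..k}"
        show "((\<lambda>t. bs s * Mhat s t) has_integral 0) {-1..1}"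
        proof (cases "s = 2")
          case True
          then have "(\<lambda>t. bs s * Mhat s t) = (\<lambda>t. 0)" using b2 unfolding bs_def by simp
          then show ?thesis by simp
        next
          case False
          then have "s \<ge> 3" using s by simp
          then show ?thesis using has_integral_mult_right[OF int_Mhat, of s "bs s"] by simp
        qed
      qed simp
      show "((\<lambda>t. c * Mhat (k + 1) t) has_integral (c * 0)) {-1..1}"
        by (rule has_integral_mult_right, rule int_Mhat) (use k2 in simp)
    qed
    then show ?thesis unfolding F_def by simp
  qed
  have "corr_fun k al c l r = (\<lambda>z. F (refcoord l r z))"
    unfolding F_def bs_def corr_fun_def by (rule ext) simp
  then show ?thesis using integral_unique[OF affine_int[OF lr hF]] by simp
qed

lemma mesh_lt: "mesh N xs \<Longrightarrow> i \<in> {1..N} \<Longrightarrow> xs (i - 1) < xs i"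
  unfolding mesh_def by (metis Suc_pred' atLeastAtMost_iff diff_less less_le_trans zero_less_one less_one not_less)

theorem mainTheorem5:
  fixes k Nx Ny :: nat and xs ys ax ay alx aly :: "nat \<Rightarrow> real"
    and u :: "real \<Rightarrow> real \<Rightarrow> real" and i j :: nat
  assumes "k \<ge> 1"
    and "mesh Nx xs" and "mesh Ny ys"
    and "dir_params k ax alx" and "dir_params k ay aly"
    and "orth_cond k k ax alx" and "orth_cond k k ay aly"
    and "i \<in> {1..Nx}" and "j \<in> {1..Ny}"
    and "\<forall>t\<in>{0,1}. \<exists>!bs. corr_sys k alx (Mcoef u xs ys i j (k + 1) t) bs"
    and "\<forall>s\<in>{0,1}. \<exists>!bs. corr_sys k aly (Mcoef u xs ys i j s (k + 1)) bs"
  shows "integral {xs (i - 1)..xs i} (RSx u xs ys k alx i j 0) = 0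
       \<and> integral {xs (i - 1)..xs i} (RSx u xs ys k alx i j 1) = 0
       \<and> integral {ys (j - 1)..ys j} (RSy u xs ys k aly i j 0) = 0
       \<and> integral {ys (j - 1)..ys j} (RSy u xs ys k aly i j 1) = 0"
proof -
  have "k \<le> 2 * k - 2" using assms(6) unfolding orth_cond_def by blast
  then have k2: "k \<ge> 2" using assms(1) by arith
  have xl: "xs (i - 1) < xs i" by (rule mesh_lt[OF assms(2,8)])
  have yl: "ys (j - 1) < ys j" by (rule mesh_lt[OF assms(3,9)])
  have X: "integral {xs (i - 1)..xs i} (RSx u xs ys k alx i j t) = 0" if t: "t \<in> {0,1}" for t
  proof -
    have ex: "\<exists>!bs. corr_sys k alx (Mcoef u xs ys i j (k + 1) t) bs" using assms(10) t by blast
    have "RSx u xs ys k alx i j t = corr_fun k alx (Mcoef u xs ys i j (k + 1) t) (xs (i - 1)) (xs i)"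
      by (rule ext) (simp add: RSx_def)
    then show ?thesis using corr_int[OF xl k2 b2_zero[OF assms(1,4,6) ex]] by simp
  qed
  have Y: "integral {ys (j - 1)..ys j} (RSy u xs ys k aly i j s) = 0" if s: "s \<in> {0,1}" for s
  proof -
    have ex: "\<exists>!bs. corr_sys k aly (Mcoef u xs ys i j s (k + 1)) bs" using assms(11) s by blast
    have "RSy u xs ys k aly i j s = corr_fun k aly (Mcoef u xs ys i j s (k + 1)) (ys (j - 1)) (ys j)"
      by (rule ext) (simp add: RSy_def)
    then show ?thesis using corr_int[OF yl k2 b2_zero[OF assms(1,5,7) ex]] by simp
  qed
  show ?thesis using X Y by simp
qed

end
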